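(* Let $d\ge 1$, $T>0$, $p\in[1,+\infty)$ and $u\in L^p(\mathbb{T}_T^d)$. Then for every $s\in(0,1)$ and every $R>2T\sqrt{d}$, \[ [u]_{s,p}^p|_{B_R}+ \frac{d\,\omega_d \left(\frac{R}{T}+2\sqrt{d}\right)^{-sp}}{sp\,(T\,c_1(R,d))^{d+sp}}\,\mathcal{F}_p^0(u) \;\leq\; \mathcal{F}_p^s (u) \;\leq\; [u]_{s,p}^p|_{B_R} + \frac{d\,\omega_d \left(\frac{R}{T}-2\sqrt{d}\right)^{-sp}}{sp\,(T\,c_2(R,d))^{d+sp}}\,\mathcal{F}_p^0(u), \] where \[ c_1(R,d)=\frac{R+2T\sqrt{d}}{R+T\sqrt{d}},\qquad c_2(R,d)=\frac{R-2T\sqrt{d}}{R-T\sqrt{d}} \] (all quantities take values in $[0,+\infty]$).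
   Context: $Q_T=[0,T]^d$, $(e_1,\dots,e_d)$ the canonical basis of $\mathbb{R}^d$. $L^p(\mathbb{T}_T^d)$ is the space of measurable $u:\mathbb{R}^d\to\mathbb{R}$ with $u(x+Te_i)=u(x)$ for a.e. $x$ and all $i$, and $u|_{Q_T}\in L^p(Q_T)$. For $s\in(0,1)$, \[ \mathcal{F}_p^s(u)=\int_{Q_T}\int_{\mathbb{R}^d}\frac{|u(x)-u(y)|^p}{|x-y|^{d+sp}}\,\mathrm{d}y\,\mathrm{d}x,\qquad \mathcal{F}_p^0(u)=\int_{Q_T}\int_{Q_T}|u(x)-u(y)|^p\,\mathrm{d}y\,\mathrm{d}x, \] and for a set $E\subset\mathbb{R}^d$, $[u]_{s,p}^p|_{E}=\int_{Q_T}\int_E \frac{|u(x)-u(y)|^p}{|x-y|^{d+sp}}\,\mathrm{d}y\,\mathrm{d}x$. $B_R$ is the open ball of radius $R$ centred at $0$. $\omega_d$ denotes the Lebesgue measure of the unit ball of $\mathbb{R}^d$, so that $d\,\omega_d=\mathcal{H}^{d-1}(\mathbb{S}^{d-1})$. *)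

theory Defs
  imports "HOL-Analysis.Analysis"
begin

definition cell :: "real \<Rightarrow> 'a::euclidean_space set" where
  "cell T = cbox 0 (T *\<^sub>R One)"

definition Lp_torus :: "real \<Rightarrow> real \<Rightarrow> ('a::euclidean_space \<Rightarrow> real) \<Rightarrow> bool" where
  "Lp_torus T p u \<longleftrightarrow> u \<in> borel_measurable lebesgue \<and>
     (\<forall>i\<in>Basis. AE x in lebesgue. u (x + T *\<^sub>R i) = u x) \<and>
     (\<integral>\<^sup>+ x\<in>cell T. ennreal (\<bar>u x\<bar> powr p) \<partial>lebesgue) < \<infinity>"

definition gag_restr :: "real \<Rightarrow> real \<Rightarrow> real \<Rightarrow> ('a::euclidean_space \<Rightarrow> real) \<Rightarrow> 'a set \<Rightarrow> ennreal" where
  "gag_restr T s p u E =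
     (\<integral>\<^sup>+ x\<in>cell T. (\<integral>\<^sup>+ y\<in>E.
        ennreal (\<bar>u x - u y\<bar> powr p / norm (x - y) powr (real DIM('a) + s * p)) \<partial>lebesgue) \<partial>lebesgue)"

definition Fs :: "real \<Rightarrow> real \<Rightarrow> real \<Rightarrow> ('a::euclidean_space \<Rightarrow> real) \<Rightarrow> ennreal" where
  "Fs T s p u = gag_restr T s p u UNIV"

definition F0 :: "real \<Rightarrow> real \<Rightarrow> ('a::euclidean_space \<Rightarrow> real) \<Rightarrow> ennreal" where
  "F0 T p u = (\<integral>\<^sup>+ x\<in>cell T. (\<integral>\<^sup>+ y\<in>cell T. ennreal (\<bar>u x - u y\<bar> powr p) \<partial>lebesgue) \<partial>lebesgue)"

definition omega :: "'a::euclidean_space itself \<Rightarrow> real" where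
  "omega _ = measure lebesgue (ball (0::'a) 1)"

definition c1 :: "real \<Rightarrow> real \<Rightarrow> real \<Rightarrow> real" where
  "c1 T R d = (R + 2 * T * sqrt d) / (R + T * sqrt d)"

definition c2 :: "real \<Rightarrow> real \<Rightarrow> real \<Rightarrow> real" where
  "c2 T R d = (R - 2 * T * sqrt d) / (R - T * sqrt d)"

end

theory Submission
  imports Defs
begin


lemma cube_dist:
  fixes v z :: "'a::euclidean_space"
  assumes "\<forall>i\<in>Basis. 0 \<le> v \<bullet> i \<and> v \<bullet> i \<le> T" "\<forall>i\<in>Basis. 0 \<le> z \<bullet> i \<and> z \<bullet> i \<le> T"
  shows "norm (v - z) \<le> T * sqrt (real DIM('a))"
proof -
  have T: "T \<ge> 0" using assms(1) by (meson Euclidean_Space.SOME_Basis order.trans)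
  have "norm (v - z) = dist v z" by (simp add: dist_norm)
  also have "\<dots> = L2_set (\<lambda>i. dist (v \<bullet> i) (z \<bullet> i)) Basis" by (rule euclidean_dist_l2)
  also have "\<dots> \<le> L2_set (\<lambda>i. T) (Basis::'a set)"
  proof (rule L2_set_mono)
    fix i :: 'a assume "i \<in> Basis"
    then have "0 \<le> v \<bullet> i" "v \<bullet> i \<le> T" "0 \<le> z \<bullet> i" "z \<bullet> i \<le> T" using assms by auto
    then show "dist (v \<bullet> i) (z \<bullet> i) \<le> T" by (auto simp: dist_real_def abs_le_iff)
  qed simp
  also have "\<dots> = T * sqrt (real DIM('a))" using T by (simp add: L2_set_constant)
  finally show ?thesis .
qed

definition Lat :: "'a::euclidean_space set" where
  "Lat = {k. \<forall>i\<in>Basis. k \<bullet> i \<in> \<int>}"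

lemma countable_Lat: "countable (Lat :: 'a::euclidean_space set)"
proof -
  let ?g = "\<lambda>f::'a \<Rightarrow> int. \<Sum>i\<in>Basis. of_int (f i) *\<^sub>R i"
  have "Lat \<subseteq> ?g ` (Basis \<rightarrow>\<^sub>E (UNIV :: int set))"
  proof
    fix k :: 'a assume k: "k \<in> Lat"
    let ?f = "restrict (\<lambda>i. \<lfloor>k \<bullet> i\<rfloor>) Basis"
    have "?g ?f = (\<Sum>i\<in>Basis. (k \<bullet> i) *\<^sub>R i)"
      by (intro sum.cong refl) (use k in \<open>auto simp: Lat_def elim!: Ints_cases\<close>)
    also have "\<dots> = k" by (rule euclidean_representation)
    finally show "k \<in> ?g ` (Basis \<rightarrow>\<^sub>E UNIV)" by (intro image_eqI[of _ _ ?f]) auto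
  qed
  moreover have "countable (?g ` (Basis \<rightarrow>\<^sub>E (UNIV :: int set)))"
    by (intro countable_image countable_PiE) auto
  ultimately show ?thesis by (rule countable_subset)
qed

lemma infinite_Lat: "infinite (Lat :: 'a::euclidean_space set)"
proof
  assume fin: "finite (Lat :: 'a set)"
  obtain b :: 'a where b: "b \<in> Basis" using nonempty_Basis by blast
  have "inj (\<lambda>n::nat. of_nat n *\<^sub>R b)"
    using b by (auto intro!: injI simp: nonzero_Basis)
  moreover have "range (\<lambda>n::nat. of_nat n *\<^sub>R b) \<subseteq> Lat"
    using b by (auto simp: Lat_def inner_Basis)
  ultimately have "infinite (Lat :: 'a set)"
    by (meson finite_subset infinite_UNIV_nat finite_imageD)
  with fin show False by simp
qed

definition Q0 :: "real \<Rightarrow> 'a::euclidean_space set" where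
  "Q0 T = {x. \<forall>i\<in>Basis. 0 \<le> x \<bullet> i \<and> x \<bullet> i < T}"

definition EE :: "real \<Rightarrow> nat \<Rightarrow> 'a::euclidean_space" where
  "EE T n = T *\<^sub>R from_nat_into Lat n"

lemma Q0_borel: "Q0 T \<in> sets (lborel :: 'a::euclidean_space measure)"
proof -
  have "Q0 T = (\<Inter>i\<in>(Basis::'a set). {x. 0 \<le> x \<bullet> i} \<inter> {x. x \<bullet> i < T})" by (auto simp: Q0_def)
  also have "\<dots> \<in> sets lborel"
    by (intro sets.finite_INT sets.Int) (auto intro!: borel_closed borel_open closed_halfspace_component_ge open_halfspace_component_lt)
  finally show ?thesis .
qed

lemma Q0_lebesgue: "Q0 T \<in> sets (lebesgue :: 'a::euclidean_space measure)"
  using Q0_borel[of T] by (intro sets_completionI_sets) simp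

lemma cover:
  fixes y :: "'a::euclidean_space"
  assumes "T > 0"
  shows "\<exists>n. y - EE T n \<in> Q0 T"
proof -
  let ?k = "\<Sum>i\<in>Basis. of_int \<lfloor>(y \<bullet> i) / T\<rfloor> *\<^sub>R i :: 'a"
  have ki: "?k \<bullet> i = of_int \<lfloor>(y \<bullet> i) / T\<rfloor>" if "i \<in> Basis" for i
    using that by (simp add: inner_sum_left inner_Basis if_distrib cong: if_cong)
  have "?k \<in> Lat" using ki by (auto simp: Lat_def)
  then obtain n where n: "from_nat_into Lat n = ?k" using from_nat_into_surj[OF countable_Lat] by blast
  have "y - EE T n \<in> Q0 T"
    unfolding Q0_def EE_def n
  proof safe
    fix i :: 'a assume i: "i \<in> Basis"
    have e: "(y - T *\<^sub>R ?k) \<bullet> i = y \<bullet> i - T * of_int \<lfloor>(y \<bullet> i) / T\<rfloor>"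
      using ki[OF i] by (simp add: inner_diff_left)
    have a: "of_int \<lfloor>(y \<bullet> i) / T\<rfloor> \<le> (y \<bullet> i) / T" "(y \<bullet> i) / T < of_int \<lfloor>(y \<bullet> i) / T\<rfloor> + 1"
      by linarith+
    from a assms have "T * of_int \<lfloor>(y \<bullet> i) / T\<rfloor> \<le> y \<bullet> i" "y \<bullet> i < T * of_int \<lfloor>(y \<bullet> i) / T\<rfloor> + T"
      by (simp_all add: le_divide_eq divide_less_eq algebra_simps)
    then show "0 \<le> (y - T *\<^sub>R ?k) \<bullet> i" "(y - T *\<^sub>R ?k) \<bullet> i < T" unfolding e by linarith+
  qed
  then show ?thesis by blast
qed

lemma Lat_unique:
  fixes y :: "'a::euclidean_space"
  assumes "T > 0" "k \<in> Lat" "k' \<in> Lat" "y - T *\<^sub>R k \<in> Q0 T" "y - T *\<^sub>R k' \<in> Q0 T"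
  shows "k = k'"
proof (rule euclidean_eqI)
  fix i :: 'a assume i: "i \<in> Basis"
  obtain m where m: "k \<bullet> i = of_int m" using assms(2) i by (auto simp: Lat_def elim!: Ints_cases)
  obtain m' where m': "k' \<bullet> i = of_int m'" using assms(3) i by (auto simp: Lat_def elim!: Ints_cases)
  have "0 \<le> y \<bullet> i - T * (k \<bullet> i)" "y \<bullet> i - T * (k \<bullet> i) < T"
       "0 \<le> y \<bullet> i - T * (k' \<bullet> i)" "y \<bullet> i - T * (k' \<bullet> i) < T"
    using assms(4,5) i by (auto simp: Q0_def inner_diff_left)
  then have "T * of_int m < T * (of_int m' + 1)" "T * of_int m' < T * (of_int m + 1)"
    unfolding m m' by (auto simp: algebra_simps)
  then have "of_int m < (of_int m' + 1 :: real)" "of_int m' < (of_int m + 1 :: real)"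
    using assms(1) by (auto simp: mult_less_cancel_left_pos)
  then have "m = m'" by linarith
  then show "k \<bullet> i = k' \<bullet> i" using m m' by simp
qed

lemma disj_cells:
  assumes "T > 0"
  shows "disjoint_family (\<lambda>n. {y::'a::euclidean_space. y - EE T n \<in> Q0 T})"
proof (auto simp: disjoint_family_on_def)
  fix m n :: nat and y :: 'a
  assume "m \<noteq> n" "y - EE T m \<in> Q0 T" "y - EE T n \<in> Q0 T"
  moreover have "from_nat_into Lat m \<in> (Lat::'a set)" "from_nat_into Lat n \<in> (Lat::'a set)"
    using from_nat_into infinite_Lat by (metis finite.emptyI)+
  ultimately have "from_nat_into Lat m = (from_nat_into Lat n :: 'a)"
    using Lat_unique[OF assms] unfolding EE_def by blast
  moreover have "inj (from_nat_into (Lat :: 'a set))"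
    using bij_betw_imp_inj_on[OF bij_betw_from_nat_into[OF countable_Lat infinite_Lat]] .
  ultimately show False using \<open>m \<noteq> n\<close> by (meson injD)
qed



lemma translate_lebesgue:
  fixes a :: "'a::euclidean_space"
  shows "lebesgue = distr lebesgue lebesgue (\<lambda>x. a + x)"
    and "(\<lambda>x. a + x) \<in> (lebesgue :: 'a measure) \<rightarrow>\<^sub>M lebesgue"
proof -
  have T: "(\<lambda>x. a + (\<Sum>j\<in>Basis. (1 * (x \<bullet> j)) *\<^sub>R j)) = (\<lambda>x::'a. a + x)"
    by (simp add: euclidean_representation)
  show "lebesgue = distr lebesgue lebesgue (\<lambda>x. a + x)"
    using lebesgue_affine_euclidean[of "\<lambda>_. 1" a, unfolded T] by (simp add: density_1)
  show "(\<lambda>x. a + x) \<in> (lebesgue :: 'a measure) \<rightarrow>\<^sub>M lebesgue"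
    using lebesgue_affine_measurable[of "\<lambda>_. 1" a, unfolded T] by simp
qed

lemma translate_meas:
  fixes a :: "'a::euclidean_space"
  assumes "g \<in> lebesgue \<rightarrow>\<^sub>M M"
  shows "(\<lambda>z. g (z + a)) \<in> lebesgue \<rightarrow>\<^sub>M M"
proof -
  have "(\<lambda>z. g (a + z)) \<in> lebesgue \<rightarrow>\<^sub>M M"
    using measurable_compose[OF translate_lebesgue(2)[of a] assms] by simp
  then show ?thesis by (simp add: add.commute)
qed

lemma nn_integral_translate:
  fixes g :: "'a::euclidean_space \<Rightarrow> ennreal"
  assumes "g \<in> borel_measurable lebesgue"
  shows "(\<integral>\<^sup>+y. g y \<partial>lebesgue) = (\<integral>\<^sup>+z. g (z + a) \<partial>lebesgue)"
proof -
  have "(\<integral>\<^sup>+y. g y \<partial>lebesgue) = (\<integral>\<^sup>+y. g y \<partial>distr lebesgue lebesgue (\<lambda>x. a + x))"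
    using arg_cong[OF translate_lebesgue(1)[of a], of "\<lambda>M. nn_integral M g"] by simp
  also have "\<dots> = (\<integral>\<^sup>+z. g (a + z) \<partial>lebesgue)"
    by (rule nn_integral_distr[OF translate_lebesgue(2)]) (simp add: assms)
  finally show ?thesis by (simp add: add.commute)
qed

lemma indicator_Q0_meas: "(\<lambda>y. indicator (Q0 T) (y - c) :: ennreal) \<in> borel_measurable (lebesgue :: 'a::euclidean_space measure)"
proof -
  have "(\<lambda>y. indicator (Q0 T) (y - c) :: ennreal) \<in> borel_measurable (lborel :: 'a measure)"
    using Q0_borel[of T] by measurable
  then show ?thesis by (rule measurable_completion)
qed

lemma periodize:
  fixes g :: "'a::euclidean_space \<Rightarrow> ennreal"
  assumes T: "T > 0" and g: "g \<in> borel_measurable lebesgue"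
  shows "(\<integral>\<^sup>+y. g y \<partial>lebesgue) = (\<integral>\<^sup>+z. indicator (Q0 T) z * (\<Sum>n. g (z + EE T n)) \<partial>lebesgue)"
proof -
  define C where "C n = {y::'a. y - EE T n \<in> Q0 T}" for n
  have indC: "indicator (C n) y = (indicator (Q0 T) (y - EE T n) :: ennreal)" for n y
    by (simp add: C_def indicator_def)
  have disj: "disjoint_family C" unfolding C_def by (rule disj_cells[OF T])
  have 1: "g y = (\<Sum>n. g y * indicator (Q0 T) (y - EE T n))" for y
  proof -
    obtain i where "y \<in> C i" using cover[OF T, of y] by (auto simp: C_def)
    from suminf_cmult_indicator[OF disj this, of "\<lambda>_. g y"] show ?thesis by (simp add: indC)
  qed
  have "(\<integral>\<^sup>+y. g y \<partial>lebesgue) = (\<integral>\<^sup>+y. (\<Sum>n. g y * indicator (Q0 T) (y - EE T n)) \<partial>lebesgue)"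
    by (subst 1) rule
  also have "\<dots> = (\<Sum>n. \<integral>\<^sup>+y. g y * indicator (Q0 T) (y - EE T n) \<partial>lebesgue)"
    by (rule nn_integral_suminf) (intro borel_measurable_times_ennreal g indicator_Q0_meas)
  also have "\<dots> = (\<Sum>n. \<integral>\<^sup>+z. g (z + EE T n) * indicator (Q0 T) z \<partial>lebesgue)"
  proof (rule suminf_cong)
    fix n
    show "(\<integral>\<^sup>+y. g y * indicator (Q0 T) (y - EE T n) \<partial>lebesgue) = (\<integral>\<^sup>+z. g (z + EE T n) * indicator (Q0 T) z \<partial>lebesgue)"
      by (subst nn_integral_translate[where a = "EE T n"])
         (auto intro!: borel_measurable_times_ennreal g indicator_Q0_meas)
  qed
  also have "\<dots> = (\<integral>\<^sup>+z. (\<Sum>n. g (z + EE T n) * indicator (Q0 T) z) \<partial>lebesgue)"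
    by (rule nn_integral_suminf[symmetric])
       (intro borel_measurable_times_ennreal translate_meas[OF g] borel_measurable_indicator Q0_lebesgue)
  also have "\<dots> = (\<integral>\<^sup>+z. indicator (Q0 T) z * (\<Sum>n. g (z + EE T n)) \<partial>lebesgue)"
    by (simp add: mult.commute)
  finally show ?thesis .
qed

lemma AE_translate:
  fixes a :: "'a::euclidean_space"
  assumes "AE y in lebesgue. P y"
  shows "AE x in lebesgue. P (x + a)"
proof -
  from assms have "AE y in lborel. P y" by (simp add: AE_completion_iff)
  then obtain N where N: "{y \<in> space lborel. \<not> P y} \<subseteq> N" "emeasure lborel N = 0" "N \<in> sets lborel" by (rule AE_E)
  then have N2: "N \<in> null_sets lborel" by auto
  have "{x. x - (- a) \<in> N} \<in> null_sets lborel" by (rule null_sets_translation[OF N2])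
  moreover have "{x \<in> space lborel. \<not> P (x + a)} \<subseteq> {x. x - (- a) \<in> N}" using N(1) by auto
  ultimately have "AE x in lborel. P (x + a)" by (rule AE_I')
  then show ?thesis by (simp add: AE_completion_iff)
qed

lemma periodic_all:
  fixes u :: "'a::euclidean_space \<Rightarrow> real"
  assumes "Lp_torus T p u"
  shows "AE z in lebesgue. \<forall>n. u (z + EE T n) = u z"
proof -
  define S where "S = {a::'a. AE x in lebesgue. u (x + a) = u x}"
  have add: "a + b \<in> S" if "a \<in> S" "b \<in> S" for a b
  proof -
    have "AE x in lebesgue. u ((x + a) + b) = u (x + a)"
      using that(2) unfolding S_def by (intro AE_translate) simp
    moreover have "AE x in lebesgue. u (x + a) = u x" using that(1) by (simp add: S_def)
    ultimately show ?thesis unfolding S_def by (simp, eventually_elim) (simp add: add.assoc)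
  qed
  have neg: "- a \<in> S" if "a \<in> S" for a
  proof -
    have "AE x in lebesgue. u ((x + - a) + a) = u (x + - a)"
      using that unfolding S_def by (intro AE_translate) simp
    then have "AE x in lebesgue. u (x + - a) = u x" by eventually_elim simp
    then show ?thesis unfolding S_def by simp
  qed
  have zero: "0 \<in> S" by (simp add: S_def)
  have natm: "of_nat n *\<^sub>R a \<in> S" if "a \<in> S" for a n
    by (induction n) (auto simp: zero add that scaleR_add_left)
  have intm: "of_int m *\<^sub>R a \<in> S" if "a \<in> S" for a m
  proof (cases "m \<ge> 0")
    case True then show ?thesis using natm[OF that, of "nat m"] by simp
  next
    case False
    then have "of_int m *\<^sub>R a = - (of_nat (nat (- m)) *\<^sub>R a)" by simp
    then show ?thesis using neg[OF natm[OF that]] by simp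
  qed
  have sumS: "finite F \<Longrightarrow> (\<forall>i\<in>F. f i \<in> S) \<longrightarrow> sum f F \<in> S" for F and f :: "'a \<Rightarrow> 'a"
    by (induction F rule: finite_induct) (auto simp: zero add)
  have basis: "T *\<^sub>R i \<in> S" if "i \<in> Basis" for i
    using assms that unfolding Lp_torus_def S_def by auto
  have lat: "T *\<^sub>R k \<in> S" if kL: "k \<in> Lat" for k
  proof -
    have "T *\<^sub>R k = (\<Sum>i\<in>Basis. (k \<bullet> i) *\<^sub>R (T *\<^sub>R i))"
      by (subst euclidean_representation[symmetric, of k]) (simp add: scaleR_sum_right mult.commute)
    also have "\<dots> \<in> S"
    proof (rule sumS[rule_format])
      fix i :: 'a assume i: "i \<in> Basis"
      then obtain m where "k \<bullet> i = of_int m" using kL by (auto simp: Lat_def elim!: Ints_cases)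
      then show "(k \<bullet> i) *\<^sub>R (T *\<^sub>R i) \<in> S" using intm[OF basis[OF i]] by simp
    qed simp
    finally show ?thesis .
  qed
  have "\<forall>n. AE z in lebesgue. u (z + EE T n) = u z"
  proof
    fix n
    have "from_nat_into Lat n \<in> (Lat :: 'a set)"
      using from_nat_into infinite_Lat by (metis finite.emptyI)
    then show "AE z in lebesgue. u (z + EE T n) = u z" using lat unfolding S_def EE_def by blast
  qed
  then show ?thesis by (simp add: AE_all_countable)
qed



lemma omega_eq: "omega TYPE('a::euclidean_space) = unit_ball_vol (real DIM('a))"
proof -
  have "omega TYPE('a) = measure lborel (ball (0::'a) 1)"
    unfolding omega_def by (simp add: measure_completion)
  also have "\<dots> = unit_ball_vol (real DIM('a))" using content_ball[of 1 "0::'a"] by simp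
  finally show ?thesis .
qed

lemma FTC_pow:
  fixes a0 q :: real
  assumes "a0 > 0" "q > 0"
  shows "(\<integral>\<^sup>+r. ennreal (q * r powr (-q-1)) * indicator {a0..} r \<partial>lborel) = ennreal (a0 powr -q)"
proof -
  have "(\<integral>\<^sup>+r. ennreal (q * r powr (-q-1)) * indicator {a0..} r \<partial>lborel) = ennreal (0 - (- (a0 powr -q)))"
  proof (rule nn_integral_FTC_atLeast)
    show "(\<lambda>r. q * r powr (- q - 1)) \<in> borel_measurable borel" by measurable
    show "((\<lambda>r. - (r powr - q)) \<longlongrightarrow> 0) at_top"
      using tendsto_minus[OF tendsto_neg_powr[of "-q" "\<lambda>x. x" at_top]] assms by (simp add: filterlim_ident)
    fix x assume x: "a0 \<le> x"
    then have "x > 0" using assms by simp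
    then show "((\<lambda>r. - (r powr - q)) has_real_derivative q * x powr (- q - 1)) (at x)"
      by (auto intro!: derivative_eq_intros)
    show "0 \<le> q * x powr (- q - 1)" using assms by simp
  qed
  then show ?thesis by simp
qed

lemma radial:
  fixes \<rho> a :: real
  assumes rho: "\<rho> > 0" and a: "a > 0"
  shows "(\<integral>\<^sup>+w. indicator {w::'a::euclidean_space. \<rho> \<le> norm w} w * ennreal (1 / norm w powr (real DIM('a) + a)) \<partial>lborel)
         = ennreal (real DIM('a) * omega TYPE('a) * \<rho> powr (-a) / a)"
proof -
  define d where "d = real DIM('a)"
  define q where "q = d + a"
  define \<omega> where "\<omega> = omega TYPE('a)"
  have d: "d \<ge> 1" unfolding d_def by simp
  have q: "q > 0" unfolding q_def using d a by simp
  have om: "\<omega> > 0" unfolding \<omega>_def omega_eq by simp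
  define h where "h = (\<lambda>(w::'a) (r::real). ennreal (q * r powr (-q-1)) * indicator {p. \<rho> \<le> norm (fst p) \<and> norm (fst p) \<le> snd p} (w, r))"
  have hm: "(\<lambda>(w, r). h w r) \<in> borel_measurable (lborel \<Otimes>\<^sub>M lborel)"
    unfolding h_def by measurable
  have pw: "indicator {w. \<rho> \<le> norm w} w * ennreal (1 / norm w powr q) = (\<integral>\<^sup>+r. h w r \<partial>lborel)" for w :: 'a
  proof (cases "\<rho> \<le> norm w")
    case True
    then have "(\<integral>\<^sup>+r. h w r \<partial>lborel) = (\<integral>\<^sup>+r. ennreal (q * r powr (-q-1)) * indicator {norm w..} r \<partial>lborel)"
      by (intro nn_integral_cong) (auto simp: h_def indicator_def)
    also have "\<dots> = ennreal (norm w powr -q)" using True rho q by (intro FTC_pow) auto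
    finally show ?thesis using True by (simp add: powr_minus_divide)
  next
    case False
    then have "\<And>r. h w r = 0" by (auto simp: h_def indicator_def)
    then show ?thesis using False by simp
  qed
  have "(\<integral>\<^sup>+w. indicator {w::'a. \<rho> \<le> norm w} w * ennreal (1 / norm w powr q) \<partial>lborel)
        = (\<integral>\<^sup>+w. (\<integral>\<^sup>+r. h w r \<partial>lborel) \<partial>lborel)"
    by (simp add: pw)
  also have "\<dots> = (\<integral>\<^sup>+r. (\<integral>\<^sup>+w. h w r \<partial>lborel) \<partial>lborel)"
    by (rule lborel_pair.Fubini'[symmetric, OF hm])
  also have "\<dots> = (\<integral>\<^sup>+r. ennreal (q * r powr (-q-1) * (\<omega> * r ^ DIM('a) - \<omega> * \<rho> ^ DIM('a))) * indicator {\<rho>..} r \<partial>lborel)"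
  proof (rule nn_integral_cong)
    fix r :: real
    have "(\<integral>\<^sup>+w. h w r \<partial>lborel) = (\<integral>\<^sup>+w. ennreal (q * r powr (-q-1)) * indicator {w::'a. \<rho> \<le> norm w \<and> norm w \<le> r} w \<partial>lborel)"
      by (intro nn_integral_cong) (auto simp: h_def indicator_def)
    also have "\<dots> = ennreal (q * r powr (-q-1)) * emeasure lborel {w::'a. \<rho> \<le> norm w \<and> norm w \<le> r}"
      by (rule nn_integral_cmult_indicator) measurable
    also have "\<dots> = ennreal (q * r powr (-q-1) * (\<omega> * r ^ DIM('a) - \<omega> * \<rho> ^ DIM('a))) * indicator {\<rho>..} r"
    proof (cases "\<rho> \<le> r")
      case True
      have e: "{w::'a. \<rho> \<le> norm w \<and> norm w \<le> r} = cball 0 r - ball 0 \<rho>" by auto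
      have "emeasure lborel {w::'a. \<rho> \<le> norm w \<and> norm w \<le> r} = emeasure lborel (cball (0::'a) r) - emeasure lborel (ball (0::'a) \<rho>)"
      proof -
        have "emeasure lborel (cball (0::'a) r - ball 0 \<rho>) = emeasure lborel (cball (0::'a) r) - emeasure lborel (ball (0::'a) \<rho>)"
          by (rule emeasure_Diff) (use True rho in \<open>auto simp: emeasure_ball\<close>)
        then show ?thesis by (subst e)
      qed
      also have "\<dots> = ennreal (\<omega> * r ^ DIM('a) - \<omega> * \<rho> ^ DIM('a))"
        using True rho om by (simp add: emeasure_ball emeasure_cball \<omega>_def omega_eq ennreal_minus)
      finally show ?thesis using True q om rho
        by (simp add: ennreal_mult[symmetric] mult_nonneg_nonneg)
    next
      case False
      then have e: "{w::'a. \<rho> \<le> norm w \<and> norm w \<le> r} = {}" by auto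
      show ?thesis using False by (subst e) simp
    qed
    finally show "(\<integral>\<^sup>+w. h w r \<partial>lborel) = \<dots>" .
  qed
  also have "\<dots> = ennreal (0 - (\<lambda>r. \<omega> * \<rho> ^ DIM('a) * r powr (-q) - q * \<omega> / a * r powr (-a)) \<rho>)"
  proof (rule nn_integral_FTC_atLeast[where F = "\<lambda>r. \<omega> * \<rho> ^ DIM('a) * r powr (-q) - q * \<omega> / a * r powr (-a)"])
    show "(\<lambda>r. q * r powr (- q - 1) * (\<omega> * r ^ DIM('a) - \<omega> * \<rho> ^ DIM('a))) \<in> borel_measurable borel"
      by measurable
    have "((\<lambda>r. \<omega> * \<rho> ^ DIM('a) * r powr (-q) - q * \<omega> / a * r powr (-a)) \<longlongrightarrow> \<omega> * \<rho> ^ DIM('a) * 0 - q * \<omega> / a * 0) at_top"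
      using q a by (intro tendsto_intros tendsto_neg_powr) (auto simp: filterlim_ident)
    then show "((\<lambda>r. \<omega> * \<rho> ^ DIM('a) * r powr (-q) - q * \<omega> / a * r powr (-a)) \<longlongrightarrow> 0) at_top" by simp
    fix x assume x: "\<rho> \<le> x"
    then have x0: "x > 0" using rho by simp
    have e: "x powr (- q - 1) * x ^ DIM('a) = x powr (- a - 1)"
      using x0 by (simp add: powr_realpow[symmetric] powr_add[symmetric] q_def d_def)
    show "((\<lambda>r. \<omega> * \<rho> ^ DIM('a) * r powr (-q) - q * \<omega> / a * r powr (-a)) has_real_derivative
           q * x powr (- q - 1) * (\<omega> * x ^ DIM('a) - \<omega> * \<rho> ^ DIM('a))) (at x)"
    proof -
      have D: "((\<lambda>r. \<omega> * \<rho> ^ DIM('a) * r powr (-q) - q * \<omega> / a * r powr (-a)) has_real_derivative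
           (\<omega> * \<rho> ^ DIM('a) * (-q * x powr (-q - 1)) - q * \<omega> / a * (-a * x powr (-a - 1)))) (at x)"
        by (intro DERIV_diff DERIV_cmult has_real_derivative_powr x0)
      have "q * x powr (- q - 1) * (\<omega> * x ^ DIM('a) - \<omega> * \<rho> ^ DIM('a))
            = q * \<omega> * (x powr (- q - 1) * x ^ DIM('a)) - q * \<omega> * \<rho> ^ DIM('a) * x powr (- q - 1)"
        by (simp add: algebra_simps)
      also have "\<dots> = q * \<omega> * x powr (- a - 1) - q * \<omega> * \<rho> ^ DIM('a) * x powr (- q - 1)"
        by (simp only: e)
      also have "\<dots> = \<omega> * \<rho> ^ DIM('a) * (-q * x powr (-q - 1)) - q * \<omega> / a * (-a * x powr (-a - 1))"
        using a by simp
      finally show ?thesis using D by simp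
    qed
    have "\<rho> ^ DIM('a) \<le> x ^ DIM('a)" using x rho by (intro power_mono) auto
    then show "0 \<le> q * x powr (- q - 1) * (\<omega> * x ^ DIM('a) - \<omega> * \<rho> ^ DIM('a))"
      using q om by (intro mult_nonneg_nonneg) auto
  qed
  also have "0 - (\<lambda>r. \<omega> * \<rho> ^ DIM('a) * r powr (-q) - q * \<omega> / a * r powr (-a)) \<rho> = d * \<omega> * \<rho> powr (-a) / a"
  proof -
    have "\<rho> ^ DIM('a) * \<rho> powr (-q) = \<rho> powr (-a)"
      using rho by (simp add: powr_realpow[symmetric] powr_add[symmetric] q_def d_def)
    then have e1: "\<omega> * \<rho> ^ DIM('a) * \<rho> powr (-q) = \<omega> * \<rho> powr (-a)" by (simp add: mult.assoc)
    have "0 - (\<lambda>r. \<omega> * \<rho> ^ DIM('a) * r powr (-q) - q * \<omega> / a * r powr (-a)) \<rho> = q * \<omega> / a * \<rho> powr (-a) - \<omega> * \<rho> powr (-a)"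
      by (simp only: e1)
    also have "\<dots> = d * \<omega> * \<rho> powr (-a) / a" using a by (simp add: q_def field_simps)
    finally show ?thesis .
  qed
  finally show ?thesis by (simp add: q_def d_def \<omega>_def)
qed



lemma cellD: "x \<in> cell T \<Longrightarrow> \<forall>i\<in>(Basis::'a::euclidean_space set). 0 \<le> x \<bullet> i \<and> x \<bullet> i \<le> T"
  by (auto simp: cell_def mem_box)

lemma Q0D: "x \<in> Q0 T \<Longrightarrow> \<forall>i\<in>(Basis::'a::euclidean_space set). 0 \<le> x \<bullet> i \<and> x \<bullet> i \<le> T"
  by (auto simp: Q0_def less_imp_le)

lemma cube0:
  assumes "\<forall>i\<in>(Basis::'a::euclidean_space set). 0 \<le> x \<bullet> i \<and> x \<bullet> i \<le> T"
  shows "norm x \<le> T * sqrt (real DIM('a))"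
proof -
  obtain b :: 'a where "b \<in> Basis" using nonempty_Basis by blast
  then have "0 \<le> T" using assms by force
  then show ?thesis using cube_dist[of x T 0] assms by simp
qed

lemma scalar_upper:
  fixes D Y sd R q :: real
  assumes "D \<ge> R - sd" "Y \<ge> D - sd" "Y \<le> D + sd" "R > 2 * sd" "sd \<ge> 0" "q > 0"
  shows "R - 2 * sd \<le> Y" "1 / D powr q \<le> ((R - sd) / (R - 2 * sd)) powr q * (1 / Y powr q)"
proof -
  show "R - 2 * sd \<le> Y" using assms by simp
  have Y0: "Y > 0" "D > 0" using assms by auto
  have "Y \<le> (R - sd) / (R - 2 * sd) * D"
  proof -
    have "Y * (R - 2 * sd) \<le> (D + sd) * (R - 2 * sd)" using assms by (intro mult_right_mono) auto
    also have "\<dots> \<le> (R - sd) * D"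
    proof -
      have "sd * (R - D - 2 * sd) \<le> 0" by (rule mult_nonneg_nonpos) (use assms in auto)
      then show ?thesis by (simp add: algebra_simps)
    qed
    finally show ?thesis using assms by (simp add: field_simps)
  qed
  then have "Y powr q \<le> ((R - sd) / (R - 2 * sd) * D) powr q"
    using Y0 assms by (intro powr_mono2) auto
  also have "\<dots> = ((R - sd) / (R - 2 * sd)) powr q * D powr q"
    by (rule powr_mult)
  finally have "Y powr q \<le> ((R - sd) / (R - 2 * sd)) powr q * D powr q" .
  then show "1 / D powr q \<le> ((R - sd) / (R - 2 * sd)) powr q * (1 / Y powr q)"
    using Y0 by (simp add: field_simps)
qed

lemma scalar_lower:
  fixes D Y sd R q :: real
  assumes "Y \<ge> R + 2 * sd" "D \<ge> Y - sd" "D \<le> Y + sd" "R > 2 * sd" "sd \<ge> 0" "q > 0"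
  shows "1 / Y powr q \<le> ((R + 2 * sd) / (R + sd)) powr q * (1 / D powr q)"
proof -
  have Y0: "Y > 0" "D > 0" using assms by auto
  have "D \<le> (R + 2 * sd) / (R + sd) * Y"
  proof -
    have "D * (R + sd) \<le> (Y + sd) * (R + sd)" using assms by (intro mult_right_mono) auto
    also have "\<dots> \<le> (R + 2 * sd) * Y"
    proof -
      have "(R + sd) * sd \<le> Y * sd" using assms by (intro mult_right_mono) auto
      then show ?thesis using assms by (simp add: algebra_simps)
    qed
    finally show ?thesis using assms by (simp add: field_simps)
  qed
  then have "D powr q \<le> ((R + 2 * sd) / (R + sd) * Y) powr q"
    using Y0 assms by (intro powr_mono2) auto
  also have "\<dots> = ((R + 2 * sd) / (R + sd)) powr q * Y powr q"
    by (rule powr_mult)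
  finally have "D powr q \<le> ((R + 2 * sd) / (R + sd)) powr q * Y powr q" .
  then show ?thesis using Y0 by (simp add: field_simps)
qed



definition GG :: "real \<Rightarrow> real \<Rightarrow> real \<Rightarrow> 'a::euclidean_space \<Rightarrow> 'a \<Rightarrow> ennreal" where
  "GG T R q x z = (\<Sum>n. indicator {y. R \<le> norm y} (z + EE T n) * ennreal (1 / norm (x - (z + EE T n)) powr q))"

lemma meas_Q0:
  assumes "T > 0"
  shows "emeasure lebesgue (Q0 T :: 'a::euclidean_space set) = ennreal (T ^ DIM('a))"
proof -
  have bx: "emeasure lborel (box 0 (T *\<^sub>R One) :: 'a set) = ennreal (T ^ DIM('a))"
    using assms by (simp add: emeasure_lborel_box_eq inner_diff_left prod_constant)
  have cbx: "emeasure lborel (cbox 0 (T *\<^sub>R One) :: 'a set) = ennreal (T ^ DIM('a))"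
    using assms by (simp add: emeasure_lborel_cbox_eq inner_diff_left prod_constant)
  have s1: "box 0 (T *\<^sub>R One) \<subseteq> (Q0 T :: 'a set)" by (fastforce simp: Q0_def mem_box)
  have s2: "(Q0 T :: 'a set) \<subseteq> cbox 0 (T *\<^sub>R One)" by (auto simp: Q0_def mem_box less_imp_le)
  have "emeasure lborel (Q0 T :: 'a set) \<le> ennreal (T ^ DIM('a))"
    using emeasure_mono[OF s2, of lborel] cbx by simp
  moreover have "ennreal (T ^ DIM('a)) \<le> emeasure lborel (Q0 T :: 'a set)"
    using emeasure_mono[OF s1 Q0_borel] bx by simp
  ultimately have "emeasure lborel (Q0 T :: 'a set) = ennreal (T ^ DIM('a))" by (rule antisym)
  moreover have "emeasure lebesgue (Q0 T :: 'a set) = emeasure lborel (main_part lborel (Q0 T :: 'a set))"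
    by (rule emeasure_completion[OF Q0_lebesgue])
  moreover have "main_part lborel (Q0 T :: 'a set) = Q0 T" by (rule main_part[OF Q0_borel])
  ultimately show ?thesis by simp
qed

lemma geo:
  fixes x z v E :: "'a::euclidean_space"
  assumes x: "x \<in> cell T" and z: "z \<in> Q0 T" and v: "v \<in> Q0 T"
  defines "sd \<equiv> T * sqrt (real DIM('a))"
  shows "norm (v + E - x) \<le> norm (x - (z + E)) + sd"
    and "norm (x - (z + E)) \<le> norm (v + E - x) + sd"
    and "norm (z + E) \<le> norm (x - (z + E)) + sd"
    and "norm (v + E - x) - 2 * sd \<le> norm (z + E)"
proof -
  have nx: "norm x \<le> sd" unfolding sd_def by (rule cube0[OF cellD[OF x]])
  have nvz: "norm (v - z) \<le> sd" unfolding sd_def by (rule cube_dist[OF Q0D[OF v] Q0D[OF z]])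
  have e1: "norm (z + E - x) = norm (x - (z + E))" by (rule norm_minus_commute)
  have "v + E - x = (z + E - x) + (v - z)" by simp
  then have "norm (v + E - x) \<le> norm (z + E - x) + norm (v - z)" by (metis norm_triangle_ineq)
  then show "norm (v + E - x) \<le> norm (x - (z + E)) + sd"
    using nvz e1 by simp
  have "x - (z + E) = - (v + E - x) + (v - z)" by simp
  then have "norm (x - (z + E)) \<le> norm (- (v + E - x)) + norm (v - z)" by (metis norm_triangle_ineq)
  moreover have "norm (- (v + E - x)) = norm (v + E - x)" by (rule norm_minus_cancel)
  ultimately show "norm (x - (z + E)) \<le> norm (v + E - x) + sd" using nvz by linarith
  have "z + E = - (x - (z + E)) + x" by simp
  then have "norm (z + E) \<le> norm (- (x - (z + E))) + norm x" by (metis norm_triangle_ineq)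
  then show "norm (z + E) \<le> norm (x - (z + E)) + sd" using nx e1 by simp
  have "v + E - x = (z + E) - x + (v - z)" by simp
  then have "norm (v + E - x) \<le> norm (z + E - x) + norm (v - z)" by (metis norm_triangle_ineq)
  moreover have "norm (z + E - x) \<le> norm (z + E) + norm x" by (rule norm_triangle_ineq4)
  ultimately show "norm (v + E - x) - 2 * sd \<le> norm (z + E)" using nx nvz by simp
qed

lemma phi_meas:
  fixes x :: "'a::euclidean_space"
  shows "(\<lambda>y. indicator {y. \<rho> \<le> norm (y - x)} y * ennreal (1 / norm (y - x) powr q)) \<in> borel_measurable lebesgue"
proof -
  have "(\<lambda>y. indicator {y. \<rho> \<le> norm (y - x)} y * ennreal (1 / norm (y - x) powr q)) \<in> borel_measurable (lborel :: 'a measure)"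
    by measurable
  then show ?thesis by (rule measurable_completion)
qed

lemma phi_integral:
  fixes x :: "'a::euclidean_space"
  assumes "\<rho> > 0" "a > 0"
  shows "(\<integral>\<^sup>+y. indicator {y. \<rho> \<le> norm (y - x)} y * ennreal (1 / norm (y - x) powr (real DIM('a) + a)) \<partial>lebesgue)
       = ennreal (real DIM('a) * omega TYPE('a) * \<rho> powr (-a) / a)"
proof -
  have "(\<integral>\<^sup>+y. indicator {y. \<rho> \<le> norm (y - x)} y * ennreal (1 / norm (y - x) powr (real DIM('a) + a)) \<partial>lebesgue)
     = (\<integral>\<^sup>+w. indicator {y. \<rho> \<le> norm (y - x)} (w + x) * ennreal (1 / norm (w + x - x) powr (real DIM('a) + a)) \<partial>lebesgue)"
    by (rule nn_integral_translate[OF phi_meas])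
  also have "\<dots> = (\<integral>\<^sup>+w. indicator {w::'a. \<rho> \<le> norm w} w * ennreal (1 / norm w powr (real DIM('a) + a)) \<partial>lborel)"
    by (simp add: nn_integral_completion indicator_def)
  also have "\<dots> = ennreal (real DIM('a) * omega TYPE('a) * \<rho> powr (-a) / a)" by (rule radial[OF assms])
  finally show ?thesis .
qed



lemma omega_nonneg: "omega TYPE('a::euclidean_space) \<ge> 0"
  by (simp add: omega_eq)

lemma G_upper:
  fixes x z :: "'a::euclidean_space"
  assumes T: "T > 0" and a: "a > 0" and R: "R > 2 * (T * sqrt (real DIM('a)))"
    and x: "x \<in> cell T" and z: "z \<in> Q0 T"
  defines "sd \<equiv> T * sqrt (real DIM('a))"
  defines "q \<equiv> real DIM('a) + a"
  defines "cc \<equiv> ((R - sd) / (R - 2 * sd)) powr q"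
  defines "K \<equiv> real DIM('a) * omega TYPE('a) * (R - 2 * sd) powr (-a) / a"
  shows "GG T R q x z \<le> ennreal (cc * K / T ^ DIM('a))"
proof -
  have sd0: "sd \<ge> 0" using T by (simp add: sd_def)
  have q0: "q > 0" using a by (simp add: q_def)
  have R': "R > 2 * sd" using R by (simp add: sd_def)
  define \<phi> where "\<phi> y = indicator {y. R - 2 * sd \<le> norm (y - x)} y * ennreal (1 / norm (y - x) powr q)" for y
  define t where "t n = indicator {y. R \<le> norm y} (z + EE T n) * ennreal (1 / norm (x - (z + EE T n)) powr q)" for n
  have \<phi>m: "\<phi> \<in> borel_measurable lebesgue" unfolding \<phi>_def by (rule phi_meas)
  have pt: "t n \<le> ennreal cc * \<phi> (v + EE T n)" if v: "v \<in> Q0 T" for n v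
  proof (cases "R \<le> norm (z + EE T n)")
    case False then show ?thesis by (simp add: t_def)
  next
    case True
    note g = geo[OF x z v, of "EE T n", folded sd_def]
    have D: "norm (x - (z + EE T n)) \<ge> R - sd" using g(3) True by linarith
    have Y1: "norm (v + EE T n - x) \<ge> norm (x - (z + EE T n)) - sd" using g(2) by linarith
    note su = scalar_upper[OF D Y1 g(1) R' sd0 q0]
    have "t n = ennreal (1 / norm (x - (z + EE T n)) powr q)" using True by (simp add: t_def)
    also have "\<dots> \<le> ennreal (cc * (1 / norm (v + EE T n - x) powr q))"
      using su(2) unfolding cc_def by (rule ennreal_leI)
    also have "\<dots> = ennreal cc * ennreal (1 / norm (v + EE T n - x) powr q)"
      by (rule ennreal_mult) (auto simp: cc_def)
    also have "\<dots> = ennreal cc * \<phi> (v + EE T n)"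
      using su(1) by (simp add: \<phi>_def)
    finally show ?thesis .
  qed
  have step1: "t n * ennreal (T ^ DIM('a)) \<le> (\<integral>\<^sup>+v. indicator (Q0 T) v * (ennreal cc * \<phi> (v + EE T n)) \<partial>lebesgue)" for n
  proof -
    have "t n * ennreal (T ^ DIM('a)) = (\<integral>\<^sup>+v. t n * indicator (Q0 T :: 'a set) v \<partial>lebesgue)"
      by (simp add: nn_integral_cmult_indicator[OF Q0_lebesgue] meas_Q0[OF T])
    also have "\<dots> \<le> (\<integral>\<^sup>+v. indicator (Q0 T) v * (ennreal cc * \<phi> (v + EE T n)) \<partial>lebesgue)"
      by (intro nn_integral_mono) (auto simp: indicator_def pt)
    finally show ?thesis .
  qed
  have meas_n: "(\<lambda>v. indicator (Q0 T) v * (ennreal cc * \<phi> (v + EE T n))) \<in> borel_measurable lebesgue" for n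
    by (intro borel_measurable_times_ennreal borel_measurable_indicator Q0_lebesgue borel_measurable_const translate_meas[OF \<phi>m])
  have "GG T R q x z * ennreal (T ^ DIM('a)) = (\<Sum>n. t n * ennreal (T ^ DIM('a)))"
    by (simp add: GG_def t_def)
  also have "\<dots> \<le> (\<Sum>n. \<integral>\<^sup>+v. indicator (Q0 T) v * (ennreal cc * \<phi> (v + EE T n)) \<partial>lebesgue)"
    by (intro suminf_le step1 summableI)
  also have "\<dots> = (\<integral>\<^sup>+v. (\<Sum>n. indicator (Q0 T) v * (ennreal cc * \<phi> (v + EE T n))) \<partial>lebesgue)"
    by (rule nn_integral_suminf[symmetric]) (rule meas_n)
  also have "\<dots> = (\<integral>\<^sup>+v. indicator (Q0 T) v * (\<Sum>n. ennreal cc * \<phi> (v + EE T n)) \<partial>lebesgue)"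
    by simp
  also have "\<dots> = (\<integral>\<^sup>+y. ennreal cc * \<phi> y \<partial>lebesgue)"
    by (rule periodize[OF T, symmetric]) (intro borel_measurable_times_ennreal borel_measurable_const \<phi>m)
  also have "\<dots> = ennreal cc * (\<integral>\<^sup>+y. \<phi> y \<partial>lebesgue)"
    by (rule nn_integral_cmult[OF \<phi>m])
  also have "(\<integral>\<^sup>+y. \<phi> y \<partial>lebesgue) = ennreal K"
    unfolding \<phi>_def q_def K_def by (rule phi_integral) (use R' a in auto)
  finally have main: "GG T R q x z * ennreal (T ^ DIM('a)) \<le> ennreal cc * ennreal K" .
  have e: "ennreal (T ^ DIM('a)) * ennreal (1 / T ^ DIM('a)) = 1"
    using T by (subst ennreal_mult[symmetric]) auto
  have K0: "K \<ge> 0" using a omega_nonneg[where 'a='a] unfolding K_def by auto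
  have cc0: "cc \<ge> 0" unfolding cc_def by simp
  have "GG T R q x z = GG T R q x z * ennreal (T ^ DIM('a)) * ennreal (1 / T ^ DIM('a))"
    by (simp add: mult.assoc e)
  also have "\<dots> \<le> ennreal cc * ennreal K * ennreal (1 / T ^ DIM('a))"
    by (rule mult_right_mono[OF main]) simp
  also have "\<dots> = ennreal (cc * K / T ^ DIM('a))"
    using K0 cc0 T by (simp add: ennreal_mult[symmetric])
  finally show ?thesis .
qed

lemma G_lower:
  fixes x z :: "'a::euclidean_space"
  assumes T: "T > 0" and a: "a > 0" and R: "R > 2 * (T * sqrt (real DIM('a)))"
    and x: "x \<in> cell T" and z: "z \<in> Q0 T"
  defines "sd \<equiv> T * sqrt (real DIM('a))"
  defines "q \<equiv> real DIM('a) + a"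
  defines "cl \<equiv> ((R + 2 * sd) / (R + sd)) powr q"
  defines "K \<equiv> real DIM('a) * omega TYPE('a) * (R + 2 * sd) powr (-a) / a"
  shows "ennreal (K / (cl * T ^ DIM('a))) \<le> GG T R q x z"
proof -
  have sd0: "sd \<ge> 0" using T by (simp add: sd_def)
  have q0: "q > 0" using a by (simp add: q_def)
  have R': "R > 2 * sd" using R by (simp add: sd_def)
  define \<psi> where "\<psi> y = indicator {y. R + 2 * sd \<le> norm (y - x)} y * ennreal (1 / norm (y - x) powr q)" for y
  define t where "t n = indicator {y. R \<le> norm y} (z + EE T n) * ennreal (1 / norm (x - (z + EE T n)) powr q)" for n
  have \<psi>m: "\<psi> \<in> borel_measurable lebesgue" unfolding \<psi>_def by (rule phi_meas)
  have pt: "\<psi> (v + EE T n) \<le> ennreal cl * t n" if v: "v \<in> Q0 T" for n v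
  proof (cases "R + 2 * sd \<le> norm (v + EE T n - x)")
    case False then show ?thesis by (simp add: \<psi>_def)
  next
    case True
    note g = geo[OF x z v, of "EE T n", folded sd_def]
    have inA: "R \<le> norm (z + EE T n)" using g(4) True by linarith
    have D1: "norm (x - (z + EE T n)) \<ge> norm (v + EE T n - x) - sd" using g(1) by linarith
    note sl = scalar_lower[OF True D1 g(2) R' sd0 q0]
    have "\<psi> (v + EE T n) = ennreal (1 / norm (v + EE T n - x) powr q)" using True by (simp add: \<psi>_def)
    also have "\<dots> \<le> ennreal (cl * (1 / norm (x - (z + EE T n)) powr q))"
      using sl unfolding cl_def by (rule ennreal_leI)
    also have "\<dots> = ennreal cl * ennreal (1 / norm (x - (z + EE T n)) powr q)"
      by (rule ennreal_mult) (auto simp: cl_def)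
    also have "\<dots> = ennreal cl * t n"
      using inA by (simp add: t_def)
    finally show ?thesis .
  qed
  have step1: "(\<integral>\<^sup>+v. indicator (Q0 T) v * \<psi> (v + EE T n) \<partial>lebesgue) \<le> ennreal cl * t n * ennreal (T ^ DIM('a))" for n
  proof -
    have "(\<integral>\<^sup>+v. indicator (Q0 T) v * \<psi> (v + EE T n) \<partial>lebesgue) \<le> (\<integral>\<^sup>+v. (ennreal cl * t n) * indicator (Q0 T :: 'a set) v \<partial>lebesgue)"
      by (intro nn_integral_mono) (auto simp: indicator_def pt)
    also have "\<dots> = ennreal cl * t n * ennreal (T ^ DIM('a))"
      by (simp add: nn_integral_cmult_indicator[OF Q0_lebesgue] meas_Q0[OF T])
    finally show ?thesis .
  qed
  have meas_n: "(\<lambda>v. indicator (Q0 T) v * \<psi> (v + EE T n)) \<in> borel_measurable lebesgue" for n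
    by (intro borel_measurable_times_ennreal borel_measurable_indicator Q0_lebesgue translate_meas[OF \<psi>m])
  have "ennreal K = (\<integral>\<^sup>+y. \<psi> y \<partial>lebesgue)"
    unfolding \<psi>_def q_def K_def by (rule phi_integral[symmetric]) (use R' a sd0 in auto)
  also have "\<dots> = (\<integral>\<^sup>+v. indicator (Q0 T) v * (\<Sum>n. \<psi> (v + EE T n)) \<partial>lebesgue)"
    by (rule periodize[OF T \<psi>m])
  also have "\<dots> = (\<integral>\<^sup>+v. (\<Sum>n. indicator (Q0 T) v * \<psi> (v + EE T n)) \<partial>lebesgue)"
    by simp
  also have "\<dots> = (\<Sum>n. \<integral>\<^sup>+v. indicator (Q0 T) v * \<psi> (v + EE T n) \<partial>lebesgue)"
    by (rule nn_integral_suminf) (rule meas_n)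
  also have "\<dots> \<le> (\<Sum>n. ennreal cl * t n * ennreal (T ^ DIM('a)))"
    by (intro suminf_le step1 summableI)
  also have "\<dots> = ennreal cl * GG T R q x z * ennreal (T ^ DIM('a))"
    by (simp add: GG_def t_def)
  finally have main: "ennreal K \<le> ennreal cl * GG T R q x z * ennreal (T ^ DIM('a))" .
  have cl0: "cl > 0" unfolding cl_def using R' sd0 by simp
  have e: "ennreal cl * ennreal (T ^ DIM('a)) * ennreal (1 / (cl * T ^ DIM('a))) = 1"
    using T cl0 by (simp add: ennreal_mult[symmetric])
  have K0: "K \<ge> 0" using a omega_nonneg[where 'a='a] unfolding K_def by auto
  have "ennreal (K / (cl * T ^ DIM('a))) = ennreal K * ennreal (1 / (cl * T ^ DIM('a)))"
    using K0 cl0 T by (simp add: ennreal_mult[symmetric])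
  also have "\<dots> \<le> ennreal cl * GG T R q x z * ennreal (T ^ DIM('a)) * ennreal (1 / (cl * T ^ DIM('a)))"
    by (rule mult_right_mono[OF main]) simp
  also have "\<dots> = GG T R q x z * (ennreal cl * ennreal (T ^ DIM('a)) * ennreal (1 / (cl * T ^ DIM('a))))"
    by (simp add: ac_simps)
  also have "\<dots> = GG T R q x z" by (simp add: e)
  finally show ?thesis .
qed



lemma sigma_finite_lebesgue: "sigma_finite_measure (lebesgue :: 'a::euclidean_space measure)"
proof -
  obtain A :: "'a set set" where A: "countable A" "A \<subseteq> sets lborel" "\<Union>A = space lborel" "\<forall>a\<in>A. emeasure lborel a \<noteq> \<infinity>"
    using sigma_finite_lborel unfolding sigma_finite_measure_def by blast
  have "\<forall>a\<in>A. emeasure lebesgue a \<noteq> \<infinity>" using A by (auto simp: subset_eq)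
  then show ?thesis unfolding sigma_finite_measure_def
    using A by (intro exI[of _ A]) auto
qed


lemma id_leb_borel[measurable]: "(\<lambda>x. x) \<in> (lebesgue :: 'a::euclidean_space measure) \<rightarrow>\<^sub>M borel"
  by (rule measurable_completion) (simp add: measurable_ident_sets)

lemma fst_lb[measurable]: "fst \<in> (lebesgue \<Otimes>\<^sub>M lebesgue :: ('a::euclidean_space \<times> 'a) measure) \<rightarrow>\<^sub>M borel"
  using measurable_compose[OF measurable_fst id_leb_borel] by (simp add: comp_def)

lemma snd_lb[measurable]: "snd \<in> (lebesgue \<Otimes>\<^sub>M lebesgue :: ('a::euclidean_space \<times> 'a) measure) \<rightarrow>\<^sub>M borel"
  using measurable_compose[OF measurable_snd id_leb_borel] by (simp add: comp_def)

lemma meas_f: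
  fixes u :: "'a::euclidean_space \<Rightarrow> real"
  assumes [measurable]: "u \<in> borel_measurable lebesgue" and B: "B \<in> sets borel"
  shows "(\<lambda>y. ennreal (\<bar>u x - u y\<bar> powr p / norm (x - y) powr q) * indicator B y) \<in> borel_measurable lebesgue"
    and "(\<lambda>(x, y). ennreal (\<bar>u x - u y\<bar> powr p / norm (x - y) powr q) * indicator B y) \<in> borel_measurable (lebesgue \<Otimes>\<^sub>M lebesgue)"
proof -
  show "(\<lambda>y. ennreal (\<bar>u x - u y\<bar> powr p / norm (x - y) powr q) * indicator B y) \<in> borel_measurable lebesgue"
    using B by measurable
  have m1[measurable]: "(\<lambda>z. u (fst z)) \<in> borel_measurable (lebesgue \<Otimes>\<^sub>M lebesgue)"
    by (rule measurable_compose[OF measurable_fst assms(1)])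
  have m2[measurable]: "(\<lambda>z. u (snd z)) \<in> borel_measurable (lebesgue \<Otimes>\<^sub>M lebesgue)"
    by (rule measurable_compose[OF measurable_snd assms(1)])
  have m3[measurable]: "(\<lambda>z. fst z - snd z) \<in> borel_measurable (lebesgue \<Otimes>\<^sub>M lebesgue :: ('a \<times> 'a) measure)"
    by (intro borel_measurable_diff fst_lb snd_lb)
  have m4[measurable]: "(\<lambda>z. indicator B (snd z) :: ennreal) \<in> borel_measurable (lebesgue \<Otimes>\<^sub>M lebesgue :: ('a \<times> 'a) measure)"
    using measurable_compose[OF snd_lb borel_measurable_indicator[OF B]] by simp
  show "(\<lambda>(x, y). ennreal (\<bar>u x - u y\<bar> powr p / norm (x - y) powr q) * indicator B y) \<in> borel_measurable (lebesgue \<Otimes>\<^sub>M lebesgue)"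
    unfolding case_prod_beta by measurable
qed



lemma const_up:
  fixes T R a \<omega> :: real and n :: nat
  assumes T: "T > 0" and a: "a > 0" and n: "n \<ge> 1" and R: "R > 2 * (T * sqrt (real n))"
  shows "real n * \<omega> * (R / T - 2 * sqrt (real n)) powr (- a) / (a * (T * c2 T R (real n)) powr (real n + a))
       = ((R - T * sqrt (real n)) / (R - 2 * (T * sqrt (real n)))) powr (real n + a) *
         (real n * \<omega> * (R - 2 * (T * sqrt (real n))) powr (- a) / a) / T ^ n"
proof -
  define sd where "sd = T * sqrt (real n)"
  define \<rho> where "\<rho> = R - 2 * sd"
  define X where "X = (R - sd) / \<rho>"
  have sd0: "sd \<ge> 0" using T by (simp add: sd_def)
  have rho: "\<rho> > 0" using R by (simp add: \<rho>_def sd_def)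
  have X0: "X > 0" using rho sd0 by (simp add: X_def \<rho>_def)
  have e1: "R / T - 2 * sqrt (real n) = \<rho> / T" using T by (simp add: \<rho>_def sd_def field_simps)
  have e2: "c2 T R (real n) = 1 / X" by (simp add: c2_def X_def \<rho>_def sd_def mult.assoc)
  have e3: "(\<rho> / T) powr (- a) = T powr a / \<rho> powr a"
    by (simp add: powr_divide powr_minus_divide)
  have e4: "(T * (1 / X)) powr (real n + a) = T ^ n * T powr a / X powr (real n + a)"
    using T by (simp add: powr_mult powr_divide powr_add powr_realpow)
  have e5: "\<rho> powr (- a) = 1 / \<rho> powr a" by (simp add: powr_minus_divide)
  have p1: "T powr a > 0" "\<rho> powr a > 0" "X powr (real n + a) > 0" "T ^ n > 0" using T rho X0 by auto
  show ?thesis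
    unfolding e1 e2 e3 e4 sd_def[symmetric] \<rho>_def[symmetric] X_def[symmetric] e5
    using p1 a by (simp add: field_simps)
qed

lemma const_lo:
  fixes T R a \<omega> :: real and n :: nat
  assumes T: "T > 0" and a: "a > 0" and n: "n \<ge> 1" and R: "R > 2 * (T * sqrt (real n))"
  shows "real n * \<omega> * (R / T + 2 * sqrt (real n)) powr (- a) / (a * (T * c1 T R (real n)) powr (real n + a))
       = (real n * \<omega> * (R + 2 * (T * sqrt (real n))) powr (- a) / a) /
         (((R + 2 * (T * sqrt (real n))) / (R + T * sqrt (real n))) powr (real n + a) * T ^ n)"
proof -
  define sd where "sd = T * sqrt (real n)"
  define \<rho> where "\<rho> = R + 2 * sd"
  define Y where "Y = \<rho> / (R + sd)"
  have sd0: "sd \<ge> 0" using T by (simp add: sd_def)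
  have rho: "\<rho> > 0" using R sd0 by (simp add: \<rho>_def sd_def)
  have Y0: "Y > 0" using rho sd0 R by (simp add: Y_def \<rho>_def sd_def)
  have e1: "R / T + 2 * sqrt (real n) = \<rho> / T" using T by (simp add: \<rho>_def sd_def field_simps)
  have e2: "c1 T R (real n) = Y" by (simp add: c1_def Y_def \<rho>_def sd_def mult.assoc)
  have e3: "(\<rho> / T) powr (- a) = T powr a / \<rho> powr a"
    by (simp add: powr_divide powr_minus_divide)
  have e4: "(T * Y) powr (real n + a) = T ^ n * T powr a * Y powr (real n + a)"
    using T by (simp add: powr_mult powr_add powr_realpow)
  have e5: "\<rho> powr (- a) = 1 / \<rho> powr a" by (simp add: powr_minus_divide)
  have p1: "T powr a > 0" "\<rho> powr a > 0" "Y powr (real n + a) > 0" "T ^ n > 0" using T rho Y0 by auto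
  show ?thesis
    unfolding e1 e2 e3 e4 sd_def[symmetric] \<rho>_def[symmetric] Y_def[symmetric] e5
    using p1 a by (simp add: field_simps)
qed



lemma meas_h:
  fixes u :: "'a::euclidean_space \<Rightarrow> real"
  assumes [measurable]: "u \<in> borel_measurable lebesgue" and B: "B \<in> sets borel"
  shows "(\<lambda>y. ennreal (\<bar>u x - u y\<bar> powr p) * indicator B y) \<in> borel_measurable lebesgue"
    and "(\<lambda>(x, y). ennreal (\<bar>u x - u y\<bar> powr p) * indicator B y) \<in> borel_measurable (lebesgue \<Otimes>\<^sub>M lebesgue)"
proof -
  show "(\<lambda>y. ennreal (\<bar>u x - u y\<bar> powr p) * indicator B y) \<in> borel_measurable lebesgue"
    using B by measurable
  have m1[measurable]: "(\<lambda>z. u (fst z)) \<in> borel_measurable (lebesgue \<Otimes>\<^sub>M lebesgue)"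
    by (rule measurable_compose[OF measurable_fst assms(1)])
  have m2[measurable]: "(\<lambda>z. u (snd z)) \<in> borel_measurable (lebesgue \<Otimes>\<^sub>M lebesgue)"
    by (rule measurable_compose[OF measurable_snd assms(1)])
  have m4[measurable]: "(\<lambda>z. indicator B (snd z) :: ennreal) \<in> borel_measurable (lebesgue \<Otimes>\<^sub>M lebesgue :: ('a \<times> 'a) measure)"
    using measurable_compose[OF snd_lb borel_measurable_indicator[OF B]] by simp
  show "(\<lambda>(x, y). ennreal (\<bar>u x - u y\<bar> powr p) * indicator B y) \<in> borel_measurable (lebesgue \<Otimes>\<^sub>M lebesgue)"
    unfolding case_prod_beta by measurable
qed

lemma cell_Q0_AE:
  assumes T: "T > 0"
  shows "AE z in lebesgue. indicator (Q0 T :: 'a::euclidean_space set) z = (indicator (cell T) z :: ennreal)"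
proof -
  define N where "N = cbox 0 (T *\<^sub>R One) - box 0 (T *\<^sub>R One :: 'a)"
  have bx: "emeasure lborel (box 0 (T *\<^sub>R One) :: 'a set) = ennreal (T ^ DIM('a))"
    using T by (simp add: emeasure_lborel_box_eq inner_diff_left prod_constant)
  have cbx: "emeasure lborel (cbox 0 (T *\<^sub>R One) :: 'a set) = ennreal (T ^ DIM('a))"
    using T by (simp add: emeasure_lborel_cbox_eq inner_diff_left prod_constant)
  have "emeasure lborel N = emeasure lborel (cbox 0 (T *\<^sub>R One) :: 'a set) - emeasure lborel (box 0 (T *\<^sub>R One) :: 'a set)"
    unfolding N_def by (rule emeasure_Diff) (auto simp: bx box_subset_cbox)
  then have "emeasure lborel N = 0" by (simp add: bx cbx)
  then have "N \<in> null_sets lborel" by (auto simp: N_def)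
  then have "AE z in lborel. z \<notin> N" by (rule AE_not_in)
  then have "AE z in lborel. indicator (Q0 T :: 'a set) z = (indicator (cell T) z :: ennreal)"
  proof eventually_elim
    case (elim z)
    have s1: "box 0 (T *\<^sub>R One) \<subseteq> (Q0 T :: 'a set)" by (fastforce simp: Q0_def mem_box)
    have s2: "(Q0 T :: 'a set) \<subseteq> cell T" by (auto simp: Q0_def cell_def mem_box less_imp_le)
    have "z \<in> Q0 T \<longleftrightarrow> z \<in> cell T" using elim s1 s2 by (auto simp: N_def cell_def)
    then show ?case by (simp add: indicator_def)
  qed
  then show ?thesis by (simp add: AE_completion_iff)
qed

lemma ennreal_div_split: "0 \<le> a \<Longrightarrow> 0 \<le> b \<Longrightarrow> ennreal (a / b) = ennreal a * ennreal (1 / b)"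
  by (simp add: ennreal_mult[symmetric])

lemma IA_eq:
  fixes u :: "'a::euclidean_space \<Rightarrow> real"
  assumes T: "T > 0" and um: "u \<in> borel_measurable lebesgue"
    and per: "AE z in lebesgue. \<forall>n. u (z + EE T n) = u z"
  shows "(\<integral>\<^sup>+y. ennreal (\<bar>u x - u y\<bar> powr p / norm (x - y) powr q) * indicator {y. R \<le> norm y} y \<partial>lebesgue)
       = (\<integral>\<^sup>+z. indicator (Q0 T) z * (ennreal (\<bar>u x - u z\<bar> powr p) * GG T R q x z) \<partial>lebesgue)"
proof -
  have A: "{y::'a. R \<le> norm y} \<in> sets borel" by measurable
  have "(\<integral>\<^sup>+y. ennreal (\<bar>u x - u y\<bar> powr p / norm (x - y) powr q) * indicator {y. R \<le> norm y} y \<partial>lebesgue)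
      = (\<integral>\<^sup>+z. indicator (Q0 T) z * (\<Sum>n. ennreal (\<bar>u x - u (z + EE T n)\<bar> powr p / norm (x - (z + EE T n)) powr q) * indicator {y. R \<le> norm y} (z + EE T n)) \<partial>lebesgue)"
    by (rule periodize[OF T meas_f(1)[OF um A]])
  also have "\<dots> = (\<integral>\<^sup>+z. indicator (Q0 T) z * (ennreal (\<bar>u x - u z\<bar> powr p) * GG T R q x z) \<partial>lebesgue)"
  proof (rule nn_integral_cong_AE)
    show "AE z in lebesgue. indicator (Q0 T) z * (\<Sum>n. ennreal (\<bar>u x - u (z + EE T n)\<bar> powr p / norm (x - (z + EE T n)) powr q) * indicator {y. R \<le> norm y} (z + EE T n))
        = indicator (Q0 T) z * (ennreal (\<bar>u x - u z\<bar> powr p) * GG T R q x z)"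
      using per
    proof eventually_elim
      case (elim z)
      have "(\<Sum>n. ennreal (\<bar>u x - u (z + EE T n)\<bar> powr p / norm (x - (z + EE T n)) powr q) * indicator {y. R \<le> norm y} (z + EE T n))
          = (\<Sum>n. ennreal (\<bar>u x - u z\<bar> powr p) * (indicator {y. R \<le> norm y} (z + EE T n) * ennreal (1 / norm (x - (z + EE T n)) powr q)))"
      proof (intro suminf_cong)
        fix n
        have "ennreal (\<bar>u x - u z\<bar> powr p / norm (x - (z + EE T n)) powr q) = ennreal (\<bar>u x - u z\<bar> powr p) * ennreal (1 / norm (x - (z + EE T n)) powr q)"
          by (rule ennreal_div_split) auto
        then show "ennreal (\<bar>u x - u (z + EE T n)\<bar> powr p / norm (x - (z + EE T n)) powr q) * indicator {y. R \<le> norm y} (z + EE T n)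
          = ennreal (\<bar>u x - u z\<bar> powr p) * (indicator {y. R \<le> norm y} (z + EE T n) * ennreal (1 / norm (x - (z + EE T n)) powr q))"
          using elim by (simp add: ac_simps)
      qed
      also have "\<dots> = ennreal (\<bar>u x - u z\<bar> powr p) * GG T R q x z"
        by (simp add: GG_def)
      finally show ?case by simp
    qed
  qed
  finally show ?thesis .
qed



theorem mainTheorem1:
  fixes u :: "'a::euclidean_space \<Rightarrow> real" and T p s R :: real
  defines "d \<equiv> real DIM('a)"
  assumes "T > 0" and "p \<ge> 1" and "Lp_torus T p u"
    and "0 < s" and "s < 1" and "R > 2 * T * sqrt d"
  shows "(gag_restr T s p u (ball 0 R)
           + ennreal (d * omega TYPE('a) * (R / T + 2 * sqrt d) powr (- s * p)
                       / (s * p * (T * c1 T R d) powr (d + s * p))) * F0 T p u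
         \<le> Fs T s p u) \<and>
         (Fs T s p u
         \<le> gag_restr T s p u (ball 0 R)
           + ennreal (d * omega TYPE('a) * (R / T - 2 * sqrt d) powr (- s * p)
                       / (s * p * (T * c2 T R d) powr (d + s * p))) * F0 T p u)"
proof -
  note T = assms(2) and L = assms(4)
  have a0: "s * p > 0" using assms(3,5) by simp
  have R: "R > 2 * (T * sqrt (real DIM('a)))" using assms(7) by (simp add: d_def mult.assoc)
  have um: "u \<in> borel_measurable lebesgue" using L by (simp add: Lp_torus_def)
  have per: "AE z in lebesgue. \<forall>n. u (z + EE T n) = u z" by (rule periodic_all[OF L])
  define q where "q = real DIM('a) + s * p"
  define sd where "sd = T * sqrt (real DIM('a))"
  define f where "f x y = ennreal (\<bar>u x - u y\<bar> powr p / norm (x - y) powr q)" for x y :: 'a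
  define A where "A = {y::'a. R \<le> norm y}"
  define JB where "JB x = (\<integral>\<^sup>+y. f x y * indicator (ball 0 R) y \<partial>lebesgue)" for x
  define IA where "IA x = (\<integral>\<^sup>+y. f x y * indicator A y \<partial>lebesgue)" for x
  define H where "H x = (\<integral>\<^sup>+z. ennreal (\<bar>u x - u z\<bar> powr p) * indicator (cell T) z \<partial>lebesgue)" for x :: 'a
  define C2 where "C2 = ((R - sd) / (R - 2 * sd)) powr q * (real DIM('a) * omega TYPE('a) * (R - 2 * sd) powr (- (s * p)) / (s * p)) / T ^ DIM('a)"
  define C1 where "C1 = (real DIM('a) * omega TYPE('a) * (R + 2 * sd) powr (- (s * p)) / (s * p)) / (((R + 2 * sd) / (R + sd)) powr q * T ^ DIM('a))"
  have Ab: "A \<in> sets borel" unfolding A_def by measurable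
  have Bb: "ball (0::'a) R \<in> sets borel" by simp
  have Cb: "cell T \<in> sets (borel :: 'a measure)" by (simp add: cell_def)
  have fm: "(\<lambda>y. f x y * indicator B y) \<in> borel_measurable lebesgue" if "B \<in> sets borel" for x B
    unfolding f_def by (rule meas_f(1)[OF um that])
  have f1m: "(\<lambda>y. f x y) \<in> borel_measurable lebesgue" for x
    using fm[of UNIV x] by simp
  have JBm: "JB \<in> borel_measurable lebesgue"
    unfolding JB_def f_def by (rule sigma_finite_measure.borel_measurable_nn_integral[OF sigma_finite_lebesgue meas_f(2)[OF um Bb]])
  have Hm: "H \<in> borel_measurable lebesgue"
    unfolding H_def by (rule sigma_finite_measure.borel_measurable_nn_integral[OF sigma_finite_lebesgue meas_h(2)[OF um Cb]])
  have split: "(\<integral>\<^sup>+y. f x y \<partial>lebesgue) = JB x + IA x" for x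
  proof -
    have "(\<integral>\<^sup>+y. f x y \<partial>lebesgue) = (\<integral>\<^sup>+y. f x y * indicator (ball 0 R) y + f x y * indicator A y \<partial>lebesgue)"
      by (intro nn_integral_cong) (auto simp: A_def indicator_def)
    also have "\<dots> = JB x + IA x"
      unfolding JB_def IA_def by (rule nn_integral_add) (intro fm Ab Bb)+
    finally show ?thesis .
  qed
  have Hq: "H x = (\<integral>\<^sup>+z. indicator (Q0 T) z * ennreal (\<bar>u x - u z\<bar> powr p) \<partial>lebesgue)" for x
    unfolding H_def using cell_Q0_AE[OF T] by (intro nn_integral_cong_AE) (auto simp: mult.commute)
  have hm: "(\<lambda>z. indicator (Q0 T) z * ennreal (\<bar>u x - u z\<bar> powr p)) \<in> borel_measurable lebesgue" for x
    using meas_h(1)[OF um Q0_borel[of T, unfolded sets_lborel], of x p] by (simp add: mult.commute)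
  have IAeq: "IA x = (\<integral>\<^sup>+z. indicator (Q0 T) z * (ennreal (\<bar>u x - u z\<bar> powr p) * GG T R q x z) \<partial>lebesgue)" for x
    unfolding IA_def f_def A_def by (rule IA_eq[OF T um per])
  have up: "IA x \<le> ennreal C2 * H x" if x: "x \<in> cell T" for x
  proof -
    have "IA x \<le> (\<integral>\<^sup>+z. ennreal C2 * (indicator (Q0 T) z * ennreal (\<bar>u x - u z\<bar> powr p)) \<partial>lebesgue)"
      unfolding IAeq
    proof (intro nn_integral_mono)
      fix z :: 'a
      show "indicator (Q0 T) z * (ennreal (\<bar>u x - u z\<bar> powr p) * GG T R q x z) \<le> ennreal C2 * (indicator (Q0 T) z * ennreal (\<bar>u x - u z\<bar> powr p))"
      proof (cases "z \<in> Q0 T")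
        case True
        have "GG T R q x z \<le> ennreal C2"
          using G_upper[OF T a0 R x True] unfolding C2_def q_def sd_def by simp
        then have "ennreal (\<bar>u x - u z\<bar> powr p) * GG T R q x z \<le> ennreal (\<bar>u x - u z\<bar> powr p) * ennreal C2"
          by (rule mult_left_mono) simp
        then show ?thesis using True by (simp add: ac_simps)
      qed simp
    qed
    also have "\<dots> = ennreal C2 * H x" by (simp add: nn_integral_cmult[OF hm] Hq)
    finally show ?thesis .
  qed
  have lo: "ennreal C1 * H x \<le> IA x" if x: "x \<in> cell T" for x
  proof -
    have "ennreal C1 * H x = (\<integral>\<^sup>+z. ennreal C1 * (indicator (Q0 T) z * ennreal (\<bar>u x - u z\<bar> powr p)) \<partial>lebesgue)"
      by (simp add: nn_integral_cmult[OF hm] Hq)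
    also have "\<dots> \<le> IA x"
      unfolding IAeq
    proof (intro nn_integral_mono)
      fix z :: 'a
      show "ennreal C1 * (indicator (Q0 T) z * ennreal (\<bar>u x - u z\<bar> powr p)) \<le> indicator (Q0 T) z * (ennreal (\<bar>u x - u z\<bar> powr p) * GG T R q x z)"
      proof (cases "z \<in> Q0 T")
        case True
        have "ennreal C1 \<le> GG T R q x z"
          using G_lower[OF T a0 R x True] unfolding C1_def q_def sd_def by simp
        then have "ennreal (\<bar>u x - u z\<bar> powr p) * ennreal C1 \<le> ennreal (\<bar>u x - u z\<bar> powr p) * GG T R q x z"
          by (rule mult_left_mono) simp
        then show ?thesis using True by (simp add: ac_simps)
      qed simp
    qed
    finally show ?thesis .
  qed
  have Fs_eq: "Fs T s p u = (\<integral>\<^sup>+x. (JB x + IA x) * indicator (cell T) x \<partial>lebesgue)"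
    by (simp add: Fs_def gag_restr_def split[symmetric] f_def q_def)
  have gag_eq: "gag_restr T s p u (ball 0 R) = (\<integral>\<^sup>+x. JB x * indicator (cell T) x \<partial>lebesgue)"
    by (simp add: gag_restr_def JB_def f_def q_def)
  have F0_eq: "F0 T p u = (\<integral>\<^sup>+x. H x * indicator (cell T) x \<partial>lebesgue)"
    by (simp add: F0_def H_def)
  have Cm: "(\<lambda>x::'a. indicator (cell T) x :: ennreal) \<in> borel_measurable lebesgue"
    using Cb by (intro borel_measurable_indicator sets_completionI_sets) simp
  have sum_eq: "(\<integral>\<^sup>+x. (JB x + ennreal C * H x) * indicator (cell T) x \<partial>lebesgue)
      = gag_restr T s p u (ball 0 R) + ennreal C * F0 T p u" for C
  proof -
    have "(\<integral>\<^sup>+x. (JB x + ennreal C * H x) * indicator (cell T) x \<partial>lebesgue)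
        = (\<integral>\<^sup>+x. JB x * indicator (cell T) x + ennreal C * (H x * indicator (cell T) x) \<partial>lebesgue)"
      by (simp add: distrib_right mult.assoc)
    also have "\<dots> = (\<integral>\<^sup>+x. JB x * indicator (cell T) x \<partial>lebesgue) + (\<integral>\<^sup>+x. ennreal C * (H x * indicator (cell T) x) \<partial>lebesgue)"
      by (rule nn_integral_add) (intro borel_measurable_times_ennreal borel_measurable_const JBm Hm Cm)+
    also have "\<dots> = gag_restr T s p u (ball 0 R) + ennreal C * F0 T p u"
      by (simp add: gag_eq F0_eq nn_integral_cmult[OF borel_measurable_times_ennreal[OF Hm Cm]])
    finally show ?thesis .
  qed
  have upper: "Fs T s p u \<le> gag_restr T s p u (ball 0 R) + ennreal C2 * F0 T p u"
    unfolding Fs_eq sum_eq[symmetric]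
    by (intro nn_integral_mono) (auto simp: indicator_def up add_left_mono)
  have lower: "gag_restr T s p u (ball 0 R) + ennreal C1 * F0 T p u \<le> Fs T s p u"
    unfolding Fs_eq sum_eq[symmetric]
    by (intro nn_integral_mono) (auto simp: indicator_def lo add_left_mono)
  have n1: "DIM('a) \<ge> 1" by simp
  have C2eq: "d * omega TYPE('a) * (R / T - 2 * sqrt d) powr (- s * p) / (s * p * (T * c2 T R d) powr (d + s * p)) = C2"
    using const_up[OF T a0 n1 R, of "omega TYPE('a)"] unfolding C2_def q_def sd_def d_def by simp
  have C1eq: "d * omega TYPE('a) * (R / T + 2 * sqrt d) powr (- s * p) / (s * p * (T * c1 T R d) powr (d + s * p)) = C1"
    using const_lo[OF T a0 n1 R, of "omega TYPE('a)"] unfolding C1_def q_def sd_def d_def by simp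
  show ?thesis unfolding C1eq C2eq using upper lower by simp
qed


end
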